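(* Let $d\ge1$, $n\ge1$, and let $\{\boldsymbol{x}_i\}_{i=1}^n$ be an $n$-point jittered sampling point process on $\mathbb{S}^d$ associated with a partition $\{D_{i,n}\}_{i=1}^n$ and constant $c$ as described in the context, with analysis matrix $X_n$. Then \[ \mathbb{E}\Big(\Big\|\frac1nX_n^TX_n-\frac1{d+1}\mathcal{I}_{d+1}\Big\|_{\mathcal F}^2\Big)\le\frac1n-\frac1n\left(1-\frac{c^2}{2n^{2/d}}\right)^2. \]
   Context: $\mathbb{S}^d=\{\boldsymbol{x}\in\mathbb{R}^{d+1}:\|\boldsymbol{x}\|=1\}$, $\sigma_d$ normalized surface measure, $\mathrm{diam}\,A=\sup\{\|\boldsymbol{x}-\boldsymbol{y}\|:\boldsymbol{x},\boldsymbol{y}\in A\}$. Analysis matrix: the $n\times(d+1)$ matrix $X_n$ with rows $\boldsymbol{x}_i^T$; $\mathcal{I}_{d+1}$ identity, $\|\cdot\|_{\mathcal F}$ Frobenius norm. Jittered sampling point process: $\{D_{i,n}\}_{i=1}^n$ is a partition of $\mathbb{S}^d$ with $\bigcup_jD_{j,n}=\mathbb{S}^d$, $\sigma_d(D_{j,n}\cap D_{k,n})=0$ for $j\neq k$, $\sigma_d(D_{j,n})=1/n$, and $\mathrm{diam}\,D_{j,n}\le c/n^{1/d}<\sqrt2$ for all $j$, with $c$ a constant independent of $n$; independently for each $i$, $\boldsymbol{x}_i$ is chosen uniformly at random from $D_{i,n}$ (w.r.t. $\sigma_d$ restricted to $D_{i,n}$ and normalized). *)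

theory Defs
  imports "HOL-Probability.Probability"
begin

text \<open>Normalized surface measure on the unit sphere of real^'m (= S^d, d+1 = CARD('m)),
  defined by the cone construction: sigma(A) = vol{t x : 0 < t \<le> 1, x \<in> A} / vol(unit ball).\<close>

definition sphere_cone :: "(real^'m) set \<Rightarrow> (real^'m) set" where
  "sphere_cone A = {t *\<^sub>R x | t x. 0 < t \<and> t \<le> 1 \<and> x \<in> A}"

definition sphere_measure :: "(real^'m) measure" where
  "sphere_measure = measure_of (sphere 0 1) (sets (restrict_space borel (sphere 0 1)))
      (\<lambda>A. emeasure lebesgue (sphere_cone A) / emeasure lebesgue (ball (0::real^'m) 1))"

text \<open>The Gram matrix X_n^T X_n of the analysis matrix X_n whose rows are x_0, ..., x_{n-1}.\<close>

definition analysis_gram :: "nat \<Rightarrow> (nat \<Rightarrow> real^'m) \<Rightarrow> real^'m^'m" where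
  "analysis_gram n x = (\<chi> j k. \<Sum>i<n. (x i $ j) * (x i $ k))"

definition frobenius_norm :: "real^'m^'k \<Rightarrow> real" where
  "frobenius_norm A = sqrt (\<Sum>j\<in>UNIV. \<Sum>k\<in>UNIV. (A $ j $ k)^2)"

definition jittered_partition :: "nat \<Rightarrow> real \<Rightarrow> (nat \<Rightarrow> (real^'m) set) \<Rightarrow> bool" where
  "jittered_partition n c D \<longleftrightarrow>
     (\<forall>i<n. D i \<in> sets sphere_measure) \<and>
     (\<Union>i<n. D i) = sphere 0 1 \<and>
     (\<forall>j<n. \<forall>k<n. j \<noteq> k \<longrightarrow> measure sphere_measure (D j \<inter> D k) = 0) \<and>
     (\<forall>i<n. measure sphere_measure (D i) = 1 / real n) \<and>
     (\<forall>i<n. diameter (D i) \<le> c / real n powr (1 / real (CARD('m) - 1))) \<and>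
     c / real n powr (1 / real (CARD('m) - 1)) < sqrt 2"

definition jittered_law :: "nat \<Rightarrow> (nat \<Rightarrow> (real^'m) set) \<Rightarrow> (nat \<Rightarrow> real^'m) measure" where
  "jittered_law n D = (\<Pi>\<^sub>M i\<in>{..<n}. uniform_measure sphere_measure (D i))"

end

theory Submission
  imports Defs
begin

lemma Basis_cart_image: "(Basis :: (real^'m) set) = (\<lambda>i. axis i 1) ` UNIV"
  by (auto simp: Basis_vec_def)

lemma prod_Basis_cart: "(\<Prod>b\<in>(Basis :: (real^'m) set). f b) = (\<Prod>i\<in>UNIV. f (axis i 1))"
proof -
  have "inj (\<lambda>i::'m. axis i (1::real))" by (auto simp: inj_def axis_eq_axis)
  then show ?thesis unfolding Basis_cart_image by (simp add: prod.reindex)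
qed

lemma lborel_signed_perm:
  fixes p :: "'m::finite \<Rightarrow> 'm" and s :: "'m \<Rightarrow> real"
  assumes p: "bij p" and s: "\<And>i. s i = 1 \<or> s i = -1"
  shows "distr lborel borel (\<lambda>x::real^'m. \<chi> i. s i * x $ p i) = lborel"
proof (rule lborel_eqI[symmetric])
  let ?T = "\<lambda>x::real^'m. \<chi> i. s i * x $ p i"
  have Tm: "?T \<in> borel_measurable borel"
  proof -
    have "linear ?T" by (auto simp: linear_iff vec_eq_iff algebra_simps)
    then show ?thesis by (intro borel_measurable_continuous_onI linear_continuous_on) (simp add: linear_conv_bounded_linear)
  qed
  show "sets (distr lborel borel ?T) = sets borel" by simp
  fix l u :: "real^'m"
  assume lu: "\<And>b. b \<in> Basis \<Longrightarrow> l \<bullet> b \<le> u \<bullet> b"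
  then have lu': "l $ i \<le> u $ i" for i
    using lu[of "axis i 1"] by (simp add: inner_axis)
  define q where "q = inv p"
  have qp: "q (p i) = i" for i unfolding q_def using p by (simp add: bij_def inv_f_f)
  have pq: "p (q j) = j" for j unfolding q_def using p by (simp add: bij_def surj_f_inv_f)
  define l' where "l' = (\<chi> j. if s (q j) = 1 then l $ q j else - u $ q j)"
  define u' where "u' = (\<chi> j. if s (q j) = 1 then u $ q j else - l $ q j)"
  have pre: "?T -` box l u = box l' u'"
  proof (rule set_eqI)
    fix x :: "real^'m"
    have "x \<in> ?T -` box l u \<longleftrightarrow> (\<forall>i. l $ i < s i * x $ p i \<and> s i * x $ p i < u $ i)"
      by (simp add: mem_box_cart)
    also have "\<dots> \<longleftrightarrow> (\<forall>j. l $ q j < s (q j) * x $ j \<and> s (q j) * x $ j < u $ q j)"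
      by (metis pq qp)
    also have "\<dots> \<longleftrightarrow> (\<forall>j. l' $ j < x $ j \<and> x $ j < u' $ j)"
    proof -
      have "(l $ q j < s (q j) * x $ j \<and> s (q j) * x $ j < u $ q j) \<longleftrightarrow> (l' $ j < x $ j \<and> x $ j < u' $ j)" for j
        using s[of "q j"] by (auto simp: l'_def u'_def)
      then show ?thesis by blast
    qed
    also have "\<dots> \<longleftrightarrow> x \<in> box l' u'" by (simp add: mem_box_cart)
    finally show "x \<in> ?T -` box l u \<longleftrightarrow> x \<in> box l' u'" .
  qed
  have l'u': "u' $ j - l' $ j = u $ q j - l $ q j" for j
    by (simp add: l'_def u'_def)
  have "emeasure (distr lborel borel ?T) (box l u) = emeasure lborel (box l' u')"
    using Tm by (simp add: emeasure_distr pre)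
  also have "\<dots> = (\<Prod>b\<in>Basis. (u' - l') \<bullet> b)"
  proof -
    have "l' $ j \<le> u' $ j" for j using lu'[of "q j"] by (simp add: l'_def u'_def)
    then show ?thesis by (subst emeasure_lborel_box_eq) (auto simp: Basis_vec_def inner_axis)
  qed
  also have "\<dots> = (\<Prod>j\<in>UNIV. u $ q j - l $ q j)"
    by (simp add: prod_Basis_cart inner_axis l'u')
  also have "\<dots> = (\<Prod>i\<in>UNIV. u $ i - l $ i)"
  proof -
    have "bij q" unfolding q_def using p by (simp add: bij_imp_bij_inv)
    then have "(\<Prod>j\<in>UNIV. u $ q j - l $ q j) = (\<Prod>i\<in>UNIV. u $ i - l $ i)"
      using prod.reindex_bij_betw[of q UNIV UNIV "\<lambda>i. u $ i - l $ i"] by (simp add: bij_def)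
    then show ?thesis by simp
  qed
  also have "\<dots> = (\<Prod>b\<in>Basis. (u - l) \<bullet> b)"
    by (simp add: prod_Basis_cart inner_axis)
  finally show "emeasure (distr lborel borel ?T) (box l u) = (\<Prod>b\<in>Basis. (u - l) \<bullet> b)" .
qed

definition sperm :: "('m::finite \<Rightarrow> 'm) \<Rightarrow> ('m \<Rightarrow> real) \<Rightarrow> real^'m \<Rightarrow> real^'m" where
  "sperm p s x = (\<chi> i. s i * x $ p i)"

lemma sperm_linear: "linear (sperm p s)"
  by (auto simp: linear_iff vec_eq_iff algebra_simps sperm_def)

lemma sperm_borel[measurable]: "sperm p s \<in> borel_measurable borel"
  using sperm_linear by (intro borel_measurable_continuous_onI linear_continuous_on) (simp add: linear_conv_bounded_linear)

lemma sperm_norm: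
  assumes p: "bij p" and s: "\<And>i. s i = 1 \<or> s i = -1"
  shows "norm (sperm p s x) = norm x"
proof -
  have "sperm p s x \<bullet> sperm p s x = (\<Sum>i\<in>UNIV. (x $ p i) * (x $ p i))"
    unfolding inner_vec_def sperm_def using s by (intro sum.cong) (auto, metis mult_1 mult_minus_left minus_mult_right minus_minus s)
  also have "\<dots> = (\<Sum>i\<in>UNIV. x $ i * x $ i)"
    using sum.reindex_bij_betw[of p UNIV UNIV "\<lambda>i. x $ i * x $ i"] p by (simp add: bij_def)
  also have "\<dots> = x \<bullet> x" by (simp add: inner_vec_def)
  finally show ?thesis by (simp add: norm_eq_sqrt_inner)
qed

lemma lborel_sperm:
  assumes p: "bij p" and s: "\<And>i. s i = 1 \<or> s i = -1"
  shows "distr lborel borel (sperm p s) = lborel"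
  using lborel_signed_perm[OF assms] unfolding sperm_def[abs_def] .

lemma space_sm[simp]: "space (sphere_measure :: (real^'m::finite) measure) = sphere 0 1"
  by (simp add: sphere_measure_def space_measure_of_conv)

lemma sets_sm: "sets (sphere_measure :: (real^'m::finite) measure) = sets (restrict_space borel (sphere 0 1))"
proof -
  have "sets (restrict_space borel (sphere (0::real^'m) 1)) \<subseteq> Pow (sphere 0 1)"
    using sets.space_closed[of "restrict_space borel (sphere (0::real^'m) 1)"] by (simp add: space_restrict_space)
  then show ?thesis unfolding sphere_measure_def sets_measure_of_conv
    using sets.sigma_sets_eq[of "restrict_space borel (sphere (0::real^'m) 1)"] by (simp add: space_restrict_space)
qed

lemma sets_sm_iff: "A \<in> sets (sphere_measure :: (real^'m::finite) measure) \<longleftrightarrow> A \<subseteq> sphere 0 1 \<and> A \<in> sets borel"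
  by (simp add: sets_sm sets_restrict_space_iff)

lemma emeasure_sm:
  assumes "emeasure (sphere_measure :: (real^'m::finite) measure) B \<noteq> 0" "A \<in> sets (sphere_measure :: (real^'m) measure)"
  shows "emeasure sphere_measure A = emeasure lebesgue (sphere_cone A) / emeasure lebesgue (ball (0::real^'m) 1)"
proof -
  let ?S = "sets (restrict_space borel (sphere (0::real^'m) 1))"
  have ms: "measure_space (sphere 0 1) (sigma_sets (sphere 0 1) ?S)
      (\<lambda>A. emeasure lebesgue (sphere_cone A) / emeasure lebesgue (ball (0::real^'m) 1))"
    using assms(1) unfolding sphere_measure_def emeasure_measure_of_conv by (auto split: if_splits)
  have "A \<in> sigma_sets (sphere 0 1) ?S" using assms(2) unfolding sets_sm by (rule sigma_sets.Basic)
  then show ?thesis using ms unfolding sphere_measure_def emeasure_measure_of_conv by simp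
qed

lemma sphere_cone_eq:
  assumes "A \<subseteq> sphere (0::real^'m::finite) 1"
  shows "sphere_cone A = {y. 0 < norm y \<and> norm y \<le> 1 \<and> y /\<^sub>R norm y \<in> A}"
proof (rule set_eqI, rule iffI)
  fix y assume "y \<in> sphere_cone A"
  then obtain t x where y: "y = t *\<^sub>R x" "0 < t" "t \<le> 1" "x \<in> A" unfolding sphere_cone_def by blast
  then have nx: "norm x = 1" using assms by auto
  then have "norm y = t" using y by simp
  have "x \<noteq> 0" using nx by auto
  then show "y \<in> {y. 0 < norm y \<and> norm y \<le> 1 \<and> y /\<^sub>R norm y \<in> A}" using y \<open>norm y = t\<close> by simp
next
  fix y assume "y \<in> {y. 0 < norm y \<and> norm y \<le> 1 \<and> y /\<^sub>R norm y \<in> A}"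
  then have y: "0 < norm y" "norm y \<le> 1" "y /\<^sub>R norm y \<in> A" by auto
  have "y = norm y *\<^sub>R (y /\<^sub>R norm y)" using y by simp
  then show "y \<in> sphere_cone A" unfolding sphere_cone_def using y by blast
qed

lemma sphere_cone_borel:
  assumes "A \<subseteq> sphere (0::real^'m::finite) 1" and [measurable]: "A \<in> sets borel"
  shows "sphere_cone A \<in> sets borel"
  unfolding sphere_cone_eq[OF assms(1)] by measurable

lemma sphere_cone_preimage:
  assumes p: "bij p" and s: "\<And>i. s i = 1 \<or> s i = -1" and A: "A \<subseteq> sphere (0::real^'m::finite) 1"
  shows "sphere_cone (sperm p s -` A \<inter> sphere 0 1) = sperm p s -` sphere_cone A"
proof -
  have lin: "sperm p s (c *\<^sub>R x) = c *\<^sub>R sperm p s x" for c x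
    using sperm_linear[of p s] by (simp add: linear_scale)
  have nT: "norm (sperm p s x) = norm x" for x using sperm_norm[of p s x] p s by blast
  have z: "sperm p s x = 0 \<longleftrightarrow> x = 0" for x using nT[of x] by (metis norm_eq_zero)
  show ?thesis
  proof (rule set_eqI)
    fix x :: "real^'m"
    have "x \<in> sphere_cone (sperm p s -` A \<inter> sphere 0 1) \<longleftrightarrow>
      0 < norm x \<and> norm x \<le> 1 \<and> x /\<^sub>R norm x \<in> sperm p s -` A \<inter> sphere 0 1"
      by (subst sphere_cone_eq) auto
    also have "\<dots> \<longleftrightarrow> 0 < norm x \<and> norm x \<le> 1 \<and> sperm p s x /\<^sub>R norm x \<in> A"
      by (auto simp: lin)
    also have "\<dots> \<longleftrightarrow> x \<in> sperm p s -` sphere_cone A"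
      unfolding sphere_cone_eq[OF A] by (simp add: nT z)
    finally show "x \<in> sphere_cone (sperm p s -` A \<inter> sphere 0 1) \<longleftrightarrow> x \<in> sperm p s -` sphere_cone A" .
  qed
qed

lemma sperm_measurable_sm:
  assumes p: "bij p" and s: "\<And>i. s i = 1 \<or> s i = -1"
  shows "sperm p s \<in> (sphere_measure :: (real^'m::finite) measure) \<rightarrow>\<^sub>M sphere_measure"
proof -
  have "sperm p s \<in> sphere 0 1 \<rightarrow> sphere 0 1" using sperm_norm[of p s] p s by auto
  then have "sperm p s \<in> restrict_space borel (sphere (0::real^'m) 1) \<rightarrow>\<^sub>M restrict_space borel (sphere 0 1)"
    by (rule measurable_restrict_space3[OF sperm_borel])
  then show ?thesis unfolding measurable_cong_sets[OF sets_sm sets_sm] .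
qed

lemma lebesgue_borel_eq: "X \<in> sets borel \<Longrightarrow> emeasure lebesgue X = emeasure lborel X"
  by simp

lemma sm_sperm_invariant:
  assumes p: "bij p" and s: "\<And>i. s i = 1 \<or> s i = -1"
    and ne: "emeasure (sphere_measure::(real^'m::finite) measure) B \<noteq> 0"
  shows "distr sphere_measure sphere_measure (sperm p s) = (sphere_measure::(real^'m::finite) measure)"
proof (rule measure_eqI)
  have Tm: "sperm p s \<in> (sphere_measure :: (real^'m::finite) measure) \<rightarrow>\<^sub>M sphere_measure"
    using sperm_measurable_sm p s by blast
  show "sets (distr sphere_measure sphere_measure (sperm p s)) = sets (sphere_measure::(real^'m::finite) measure)" by simp
  fix A assume "A \<in> sets (distr sphere_measure sphere_measure (sperm p s))"
  then have A: "A \<in> sets (sphere_measure::(real^'m::finite) measure)" by simp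
  then have Asub: "A \<subseteq> sphere 0 1" and Ab: "A \<in> sets borel" by (auto simp: sets_sm_iff)
  have pre: "sperm p s -` A \<inter> sphere 0 1 \<in> sets (sphere_measure::(real^'m::finite) measure)"
    using measurable_sets[OF Tm A] by simp
  have cb: "sphere_cone A \<in> sets borel" by (rule sphere_cone_borel[OF Asub Ab])
  have cb': "sperm p s -` sphere_cone A \<in> sets borel"
    using measurable_sets_borel[OF sperm_borel cb] .
  have cone_eq: "sphere_cone (sperm p s -` A \<inter> sphere 0 1) = sperm p s -` sphere_cone A"
    using sphere_cone_preimage[of p s A] p s Asub by blast
  have "emeasure (distr sphere_measure sphere_measure (sperm p s)) A = emeasure sphere_measure (sperm p s -` A \<inter> sphere 0 1)"
    using Tm A by (simp add: emeasure_distr)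
  also have "\<dots> = emeasure lebesgue (sphere_cone (sperm p s -` A \<inter> sphere 0 1)) / emeasure lebesgue (ball (0::real^'m) 1)"
    by (rule emeasure_sm[OF ne pre])
  also have "\<dots> = emeasure lborel (sperm p s -` sphere_cone A) / emeasure lebesgue (ball (0::real^'m) 1)"
    unfolding cone_eq using cb' by simp
  also have "emeasure lborel (sperm p s -` sphere_cone A) = emeasure (distr lborel borel (sperm p s)) (sphere_cone A)"
    using cb by (simp add: emeasure_distr)
  also have "\<dots> = emeasure lborel (sphere_cone A)" using lborel_sperm[of p s] p s by simp
  also have "emeasure lborel (sphere_cone A) / emeasure lebesgue (ball (0::real^'m) 1) = emeasure sphere_measure A"
    using emeasure_sm[OF ne A] cb by simp
  finally show "emeasure (distr sphere_measure sphere_measure (sperm p s)) A = emeasure sphere_measure A" .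
qed

lemma sm_integral_sperm:
  fixes f :: "real^'m::finite \<Rightarrow> real"
  assumes p: "bij p" and s: "\<And>i. s i = 1 \<or> s i = -1"
    and ne: "emeasure (sphere_measure::(real^'m::finite) measure) B \<noteq> 0"
    and f: "f \<in> borel_measurable sphere_measure"
  shows "(\<integral>x. f (sperm p s x) \<partial>sphere_measure) = (\<integral>x. f x \<partial>sphere_measure)"
proof -
  have Tm: "sperm p s \<in> (sphere_measure :: (real^'m::finite) measure) \<rightarrow>\<^sub>M sphere_measure"
    using sperm_measurable_sm p s by blast
  have "(\<integral>x. f x \<partial>sphere_measure) = (\<integral>x. f x \<partial>distr sphere_measure sphere_measure (sperm p s))"
    using sm_sperm_invariant[of p s B] p s ne by simp
  also have "\<dots> = (\<integral>x. f (sperm p s x) \<partial>sphere_measure)"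
    by (rule integral_distr[OF Tm f])
  finally show ?thesis by simp
qed

lemma borel_sm: "f \<in> borel_measurable borel \<Longrightarrow> f \<in> borel_measurable (sphere_measure :: (real^'m::finite) measure)"
  unfolding measurable_cong_sets[OF sets_sm refl] by (rule measurable_restrict_space1)

lemma comp_le1: "x \<in> sphere (0::real^'m::finite) 1 \<Longrightarrow> \<bar>x $ j\<bar> \<le> 1"
  using component_le_norm_cart[of x j] by simp

lemma sum_sq_sphere: "x \<in> sphere (0::real^'m::finite) 1 \<Longrightarrow> (\<Sum>j\<in>UNIV. x $ j * x $ j) = 1"
proof -
  assume "x \<in> sphere (0::real^'m::finite) 1"
  then have "x \<bullet> x = 1" using power2_norm_eq_inner[of x] by simp  
  then show ?thesis by (simp add: inner_vec_def)
qed

locale jit =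
  fixes n :: nat and c :: real and D :: "nat \<Rightarrow> (real^'m::finite) set"
  assumes card2: "CARD('m) \<ge> 2" and n1: "n \<ge> 1" and jp: "jittered_partition n c D"
begin

abbreviation SM :: "(real^'m) measure" where "SM \<equiv> sphere_measure"

lemma D_sets: "i < n \<Longrightarrow> D i \<in> sets SM"
  using jp unfolding jittered_partition_def by blast

lemma D_sub: "i < n \<Longrightarrow> D i \<subseteq> sphere 0 1"
  using D_sets sets_sm_iff by blast

lemma D_measure: "i < n \<Longrightarrow> measure SM (D i) = 1 / real n"
  using jp unfolding jittered_partition_def by blast

lemma D_emeasure: "i < n \<Longrightarrow> emeasure SM (D i) = ennreal (1 / real n)"
proof -
  assume i: "i < n"
  have "emeasure SM (D i) \<noteq> top"
  proof
    assume "emeasure SM (D i) = top"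
    then have "measure SM (D i) = 0" by (simp add: measure_def)
    then show False using D_measure[OF i] n1 by simp
  qed
  then show ?thesis using D_measure[OF i] by (simp add: emeasure_eq_ennreal_measure)
qed

lemma ne: "emeasure SM (D 0) \<noteq> 0"
  using D_emeasure[of 0] n1 by simp

lemma cover: "(\<Union>i<n. D i) = sphere 0 1"
  using jp unfolding jittered_partition_def by blast

lemma overlap: "j < n \<Longrightarrow> k < n \<Longrightarrow> j \<noteq> k \<Longrightarrow> measure SM (D j \<inter> D k) = 0"
  using jp unfolding jittered_partition_def by blast

lemma finite_SM: "finite_measure SM"
proof (rule finite_measureI)
  have "emeasure SM (space SM) = emeasure SM (\<Union>i<n. D i)" using cover by simp
  also have "\<dots> \<le> (\<Sum>i<n. emeasure SM (D i))"
    by (rule emeasure_subadditive_finite) (auto simp: D_sets)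
  also have "\<dots> = (\<Sum>i<n. ennreal (1 / real n))" by (simp add: D_emeasure)
  also have "\<dots> < top" by (simp add: ennreal_mult_less_top of_nat_less_top)
  finally show "emeasure SM (space SM) \<noteq> \<infinity>" by simp
qed

interpretation SM: finite_measure SM by (rule finite_SM)

lemma integrable_SM:
  fixes f :: "real^'m \<Rightarrow> real"
  assumes "f \<in> borel_measurable SM" "\<And>x. x \<in> sphere 0 1 \<Longrightarrow> \<bar>f x\<bar> \<le> B"
  shows "integrable SM f"
  by (rule SM.integrable_const_bound[where B=B]) (use assms in auto)

lemma AE_one: "AE x in SM. (\<Sum>i<n. indicator (D i) x) = (1::real)"
proof -
  let ?P = "{(j, k). j < n \<and> k < n \<and> j \<noteq> k}"
  have fin: "finite ?P" by (rule finite_subset[of _ "{..<n} \<times> {..<n}"]) auto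
  have "\<forall>jk\<in>?P. AE x in SM. x \<notin> D (fst jk) \<inter> D (snd jk)"
  proof
    fix jk assume "jk \<in> ?P"
    then obtain j k where jk: "jk = (j, k)" "j < n" "k < n" "j \<noteq> k" by auto
    have s: "D j \<inter> D k \<in> sets SM" using D_sets jk by auto
    have "emeasure SM (D j \<inter> D k) = 0"
      using overlap[OF jk(2-4)] s by (simp add: SM.emeasure_eq_measure)
    then have "D j \<inter> D k \<in> null_sets SM" using s by auto
    then show "AE x in SM. x \<notin> D (fst jk) \<inter> D (snd jk)" unfolding jk(1) fst_conv snd_conv by (rule AE_not_in)
  qed
  then have ae: "AE x in SM. \<forall>jk\<in>?P. x \<notin> D (fst jk) \<inter> D (snd jk)"
    by (rule eventually_ball_finite[OF fin])
  have key: "(\<Sum>i<n. indicator (D i) x) = (1::real)"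
    if x: "x \<in> space SM" and h: "\<forall>jk\<in>?P. x \<notin> D (fst jk) \<inter> D (snd jk)" for x
  proof -
    have "x \<in> (\<Union>i<n. D i)" using x cover by simp
    then obtain i0 where i0: "i0 < n" "x \<in> D i0" by blast
    have "(\<Sum>i<n. indicator (D i) x) = (\<Sum>i<n. if i = i0 then 1 else (0::real))"
    proof (rule sum.cong)
      fix i assume "i \<in> {..<n}"
      then show "indicator (D i) x = (if i = i0 then 1 else (0::real))"
        using h i0 by (cases "i = i0") (auto simp: indicator_def)
    qed simp
    also have "\<dots> = 1" using i0 by simp
    finally show "(\<Sum>i<n. indicator (D i) x) = (1::real)" .
  qed
  show ?thesis by (rule AE_mp[OF ae]) (auto intro!: AE_I2 key)
qed

end

lemma bm_cont: "continuous_on UNIV (f :: real^'m::finite \<Rightarrow> real) \<Longrightarrow> f \<in> borel_measurable (sphere_measure :: (real^'m) measure)"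
  by (intro borel_sm borel_measurable_continuous_onI)

lemma cont_jk: "continuous_on UNIV (\<lambda>x::real^'m::finite. x $ j * x $ k)"
  by (intro continuous_intros)

context jit begin

interpretation SM: finite_measure SM by (rule finite_SM)

lemma int_partition:
  fixes f :: "real^'m \<Rightarrow> real"
  assumes f: "f \<in> borel_measurable SM" and b: "\<And>x. x \<in> sphere 0 1 \<Longrightarrow> \<bar>f x\<bar> \<le> B"
  shows "(\<integral>x. f x \<partial>SM) = (\<Sum>i<n. \<integral>x. indicator (D i) x * f x \<partial>SM)"
proof -
  have mi: "(\<lambda>x. indicator (D i) x * f x) \<in> borel_measurable SM" if "i < n" for i
    using D_sets[OF that] f by (intro borel_measurable_times borel_measurable_indicator)
  have "(\<integral>x. f x \<partial>SM) = (\<integral>x. (\<Sum>i<n. indicator (D i) x) * f x \<partial>SM)"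
  proof (rule integral_cong_AE)
    show "f \<in> borel_measurable SM" by (rule f)
    show "(\<lambda>x. (\<Sum>i<n. indicator (D i) x) * f x) \<in> borel_measurable SM"
      using D_sets f by (intro borel_measurable_times borel_measurable_sum borel_measurable_indicator) auto
    show "AE x in SM. f x = (\<Sum>i<n. indicator (D i) x) * f x"
      using AE_one by (auto elim!: eventually_mono)
  qed
  also have "\<dots> = (\<integral>x. (\<Sum>i<n. indicator (D i) x * f x) \<partial>SM)"
    by (simp add: sum_distrib_right)
  also have "\<dots> = (\<Sum>i<n. \<integral>x. indicator (D i) x * f x \<partial>SM)"
  proof (rule Bochner_Integration.integral_sum[where f="\<lambda>i x. indicator (D i) x * f x"])
    fix i assume "i \<in> {..<n}"
    then show "integrable SM (\<lambda>x. indicator (D i) x * f x)"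
      using mi by (intro integrable_SM[where B="\<bar>B\<bar>"]) (auto simp: indicator_def intro: order.trans[OF b])
  qed
  finally show ?thesis .
qed

lemma space_measure_1: "measure SM (space SM) = 1"
proof -
  have "(\<integral>x. 1 \<partial>SM) = (\<Sum>i<n. \<integral>x. indicator (D i) x * (1::real) \<partial>SM)"
    by (rule int_partition[where f="\<lambda>_. 1" and B=1]) auto
  also have "\<dots> = (\<Sum>i<n. 1 / real n)"
  proof (rule sum.cong)
    fix i assume "i \<in> {..<n}"
    then have i: "i < n" by simp
    show "(\<integral>x. indicator (D i) x * 1 \<partial>SM) = 1 / real n"
      using D_sets[OF i] D_measure[OF i] D_emeasure[OF i] D_sub[OF i] by (simp add: Int_absorb2)
  qed simp
  also have "\<dots> = 1" using n1 by simp
  finally show ?thesis by simp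
qed

lemma mu_density:
  assumes i: "i < n"
  shows "uniform_measure SM (D i) = density SM (\<lambda>x. ennreal (real n * indicator (D i) x))"
proof -
  have "(\<lambda>x. (indicator (D i) x :: ennreal) / emeasure SM (D i)) = (\<lambda>x. ennreal (real n * indicator (D i) x))"
  proof (rule ext)
    fix x
    have "(1::ennreal) / ennreal (1 / real n) = ennreal (real n)"
      using divide_ennreal[of 1 "1 / real n"] n1 by simp
    then show "(indicator (D i) x :: ennreal) / emeasure SM (D i) = ennreal (real n * indicator (D i) x)"
      using D_emeasure[OF i] by (cases "x \<in> D i") auto
  qed
  then show ?thesis unfolding uniform_measure_def by simp
qed

lemma mu_prob: "i < n \<Longrightarrow> prob_space (uniform_measure SM (D i))"
  using D_emeasure[of i] n1 by (intro prob_space_uniform_measure) auto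

lemma mu_AE: "i < n \<Longrightarrow> AE x in uniform_measure SM (D i). x \<in> D i"
  using D_sets[of i] by (intro AE_uniform_measureI) auto

lemma mu_integral:
  fixes f :: "real^'m \<Rightarrow> real"
  assumes i: "i < n" and f: "f \<in> borel_measurable SM" and b: "\<And>x. x \<in> sphere 0 1 \<Longrightarrow> \<bar>f x\<bar> \<le> B"
  shows "integrable (uniform_measure SM (D i)) f"
    and "(\<integral>x. f x \<partial>uniform_measure SM (D i)) = real n * (\<integral>x. indicator (D i) x * f x \<partial>SM)"
proof -
  have g: "(\<lambda>x. real n * indicator (D i) x) \<in> borel_measurable SM"
    using D_sets[OF i] by (intro borel_measurable_times borel_measurable_indicator borel_measurable_const)
  have gnn: "AE x in SM. 0 \<le> real n * indicator (D i) x" by auto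
  have "integrable SM (\<lambda>x. (real n * indicator (D i) x) *\<^sub>R f x)"
    using g f by (intro integrable_SM[where B="real n * \<bar>B\<bar>"])
       (auto simp: indicator_def abs_mult intro!: mult_left_mono order.trans[OF b] )
  then show "integrable (uniform_measure SM (D i)) f"
    unfolding mu_density[OF i] using integrable_density[OF f g gnn] by simp
  have "(\<integral>x. f x \<partial>uniform_measure SM (D i)) = (\<integral>x. (real n * indicator (D i) x) *\<^sub>R f x \<partial>SM)"
    unfolding mu_density[OF i] by (rule integral_density[OF f g gnn])
  also have "\<dots> = real n * (\<integral>x. indicator (D i) x * f x \<partial>SM)"
    by (simp add: mult.assoc)
  finally show "(\<integral>x. f x \<partial>uniform_measure SM (D i)) = real n * (\<integral>x. indicator (D i) x * f x \<partial>SM)" .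
qed

lemma moment2:
  "(\<integral>x. x $ j * x $ k \<partial>SM) = (if j = k then 1 / real CARD('m) else 0)"
proof -
  have bm: "(\<lambda>x::real^'m. x $ j * x $ k) \<in> borel_measurable SM" for j k
    by (intro bm_cont cont_jk)
  have bd: "\<bar>x $ j * x $ k\<bar> \<le> 1" if "x \<in> sphere 0 1" for x :: "real^'m" and j k
    using comp_le1[OF that, of j] comp_le1[OF that, of k] by (simp add: abs_mult mult_le_one)
  have intg: "integrable SM (\<lambda>x::real^'m. x $ j * x $ k)" for j k
    by (rule integrable_SM[OF bm, where B=1]) (rule bd)
  have off: "(\<integral>x. x $ j * x $ k \<partial>SM) = 0" if jk: "j \<noteq> k" for j k
  proof -
    let ?s = "\<lambda>i. if i = j then -1 else (1::real)"
    have "(\<integral>x. (sperm id ?s x) $ j * (sperm id ?s x) $ k \<partial>SM) = (\<integral>x. x $ j * x $ k \<partial>SM)"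
      by (rule sm_integral_sperm[OF bij_id _ ne, where f="\<lambda>x. x $ j * x $ k"]) (auto intro: bm)
    moreover have "(\<integral>x. (sperm id ?s x) $ j * (sperm id ?s x) $ k \<partial>SM) = - (\<integral>x. x $ j * x $ k \<partial>SM)"
      using jk by (simp add: sperm_def)
    ultimately show ?thesis by simp
  qed
  have diag: "(\<integral>x. x $ j * x $ j \<partial>SM) = (\<integral>x. x $ k * x $ k \<partial>SM)" for j k
  proof -
    define p where "p = (\<lambda>i. if i = j then k else if i = k then j else i)"
    have "p \<circ> p = id" by (auto simp: p_def fun_eq_iff)
    then have bp: "bij p" by (metis o_bij)
    have "(\<integral>x. (sperm p (\<lambda>_. 1) x) $ j * (sperm p (\<lambda>_. 1) x) $ j \<partial>SM) = (\<integral>x. x $ j * x $ j \<partial>SM)"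
      by (rule sm_integral_sperm[OF bp _ ne, where f="\<lambda>x. x $ j * x $ j"]) (auto intro: bm)
    moreover have "(\<integral>x. (sperm p (\<lambda>_. 1) x) $ j * (sperm p (\<lambda>_. 1) x) $ j \<partial>SM) = (\<integral>x. x $ k * x $ k \<partial>SM)"
      by (simp add: sperm_def p_def)
    ultimately show ?thesis by simp
  qed
  obtain j0 :: 'm where True by blast
  have "(\<Sum>j\<in>UNIV. \<integral>x. x $ j * x $ j \<partial>SM) = (\<integral>x. (\<Sum>j\<in>UNIV. x $ j * x $ j) \<partial>SM)"
    by (rule Bochner_Integration.integral_sum[where f="\<lambda>j x. x $ j * x $ j", symmetric]) (rule intg)
  also have "\<dots> = (\<integral>x. 1 \<partial>SM)"
    by (rule Bochner_Integration.integral_cong[OF refl]) (simp add: sum_sq_sphere)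
  also have "\<dots> = 1" using space_measure_1 by simp
  finally have "(\<Sum>j\<in>UNIV. \<integral>x. x $ j * x $ j \<partial>SM) = 1" .
  moreover have "(\<Sum>j\<in>UNIV. \<integral>x. x $ j * x $ j \<partial>SM) = real CARD('m) * (\<integral>x. x $ j0 * x $ j0 \<partial>SM)"
  proof -
    have "(\<Sum>j\<in>UNIV. \<integral>x. x $ j * x $ j \<partial>SM) = (\<Sum>j\<in>(UNIV::'m set). \<integral>x. x $ j0 * x $ j0 \<partial>SM)"
      by (intro sum.cong refl diag)
    then show ?thesis by simp
  qed
  ultimately have "(\<integral>x. x $ j0 * x $ j0 \<partial>SM) = 1 / real CARD('m)"
    by (simp add: field_simps)
  then show ?thesis using off diag[of j j0] by auto
qed

end

context jit begin

interpretation SM: finite_measure SM by (rule finite_SM)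

abbreviation mu :: "nat \<Rightarrow> (real^'m) measure" where "mu i \<equiv> uniform_measure SM (D i)"

lemma sum_moments:
  "(\<Sum>i<n. \<integral>y. y $ j * y $ k \<partial>mu i) = real n * (if j = k then 1 / real CARD('m) else 0)"
proof -
  have bm: "(\<lambda>x::real^'m. x $ j * x $ k) \<in> borel_measurable SM"
    by (intro bm_cont cont_jk)
  have bd: "\<bar>x $ j * x $ k\<bar> \<le> 1" if "x \<in> sphere 0 1" for x :: "real^'m"
    using comp_le1[OF that, of j] comp_le1[OF that, of k] by (simp add: abs_mult mult_le_one)
  have "(\<Sum>i<n. \<integral>y. y $ j * y $ k \<partial>mu i) = (\<Sum>i<n. real n * (\<integral>y. indicator (D i) y * (y $ j * y $ k) \<partial>SM))"
    by (intro sum.cong refl mu_integral(2)[OF _ bm bd]) auto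
  also have "\<dots> = real n * (\<Sum>i<n. (\<integral>y. indicator (D i) y * (y $ j * y $ k) \<partial>SM))"
    by (simp add: sum_distrib_left)
  also have "(\<Sum>i<n. (\<integral>y. indicator (D i) y * (y $ j * y $ k) \<partial>SM)) = (\<integral>y. y $ j * y $ k \<partial>SM)"
    by (rule int_partition[OF bm bd, symmetric])
  finally show ?thesis by (simp add: moment2)
qed

lemma bound_if1:
  fixes f :: "real^'m \<Rightarrow> real" and B :: real
  assumes "\<And>x. x \<in> sphere 0 1 \<Longrightarrow> \<bar>f x\<bar> \<le> B" "y \<in> sphere 0 1"
  shows "\<bar>(if P then f y else 1)\<bar> \<le> max 1 \<bar>B\<bar>"
  using assms(1)[OF assms(2)] by auto

lemma pair_int:
  fixes f g :: "real^'m \<Rightarrow> real"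
  assumes i: "i < n" and l: "l < n"
    and f: "f \<in> borel_measurable SM" "\<And>x. x \<in> sphere 0 1 \<Longrightarrow> \<bar>f x\<bar> \<le> Bf"
    and g: "g \<in> borel_measurable SM" "\<And>x. x \<in> sphere 0 1 \<Longrightarrow> \<bar>g x\<bar> \<le> Bg"
  shows "integrable (jittered_law n D) (\<lambda>x. f (x i) * g (x l))"
    and "(\<integral>x. f (x i) * g (x l) \<partial>jittered_law n D) =
          (if i = l then (\<integral>y. f y * g y \<partial>mu i) else (\<integral>y. f y \<partial>mu i) * (\<integral>y. g y \<partial>mu l))"
proof -
  define M' where "M' t = uniform_measure SM (D (if t < n then t else 0))" for t
  have Mp: "prob_space (M' t)" for t using mu_prob n1 by (simp add: M'_def)
  interpret PS: product_sigma_finite M'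
    unfolding product_sigma_finite_def using prob_space_imp_sigma_finite[OF Mp] by blast
  have law: "jittered_law n D = PiM {..<n} M'"
    unfolding jittered_law_def M'_def by (rule PiM_cong) auto
  define h where "h t y = (if t = i then f y else 1) * (if t = l then g y else 1)" for t y
  have hmeas: "h t \<in> borel_measurable SM" for t
    unfolding h_def using f(1) g(1) by simp
  have hbd: "\<bar>h t y\<bar> \<le> max 1 \<bar>Bf\<bar> * max 1 \<bar>Bg\<bar>" if "y \<in> sphere 0 1" for t y
    unfolding h_def abs_mult
    by (intro mult_mono bound_if1[OF f(2) that] bound_if1[OF g(2) that]) auto
  have hint: "integrable (M' t) (h t)" if "t \<in> {..<n}" for t
    using that mu_integral(1)[OF _ hmeas hbd] by (simp add: M'_def)
  have prodeq: "(\<Prod>t\<in>{..<n}. h t (x t)) = f (x i) * g (x l)" for x :: "nat \<Rightarrow> real^'m"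
    unfolding h_def prod.distrib using i l by (simp add: prod.delta)
  show "integrable (jittered_law n D) (\<lambda>x. f (x i) * g (x l))"
    using PS.product_integrable_prod[of "{..<n}" h, OF _ hint] unfolding law prodeq by simp
  have "(\<integral>x. f (x i) * g (x l) \<partial>jittered_law n D) = (\<integral>x. (\<Prod>t\<in>{..<n}. h t (x t)) \<partial>PiM {..<n} M')"
    unfolding law prodeq ..
  also have "\<dots> = (\<Prod>t\<in>{..<n}. integral\<^sup>L (M' t) (h t))"
    by (rule PS.product_integral_prod[OF _ hint]) auto
  also have "\<dots> = (\<Prod>t\<in>{i, l}. integral\<^sup>L (M' t) (h t))"
  proof (rule prod.mono_neutral_right)
    show "\<forall>t\<in>{..<n} - {i, l}. integral\<^sup>L (M' t) (h t) = 1"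
    proof
      fix t assume "t \<in> {..<n} - {i, l}"
      then have "h t = (\<lambda>_. 1)" by (auto simp: h_def fun_eq_iff)
      then show "integral\<^sup>L (M' t) (h t) = 1"
        using prob_space.prob_space[OF Mp[of t]] by simp
    qed
  qed (use i l in auto)
  also have "\<dots> = (if i = l then (\<integral>y. f y * g y \<partial>mu i) else (\<integral>y. f y \<partial>mu i) * (\<integral>y. g y \<partial>mu l))"
  proof -
    have hi: "h i = (\<lambda>y. f y * (if i = l then g y else 1))" by (auto simp: h_def fun_eq_iff)
    have hl: "h l = (\<lambda>y. (if l = i then f y else 1) * g y)" by (auto simp: h_def fun_eq_iff)
    show ?thesis using i l by (cases "i = l") (auto simp: hi hl M'_def)
  qed
  finally show "(\<integral>x. f (x i) * g (x l) \<partial>jittered_law n D) =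
          (if i = l then (\<integral>y. f y * g y \<partial>mu i) else (\<integral>y. f y \<partial>mu i) * (\<integral>y. g y \<partial>mu l))" .
qed

end

context jit begin

interpretation SM: finite_measure SM by (rule finite_SM)

lemma P_prob: "prob_space (jittered_law n D)"
  unfolding jittered_law_def by (rule prob_space_PiM) (rule mu_prob, simp)

lemma sq_expand:
  fixes A c0 :: real and a :: "nat \<Rightarrow> real"
  assumes "A = (\<Sum>i<n. a i)"
  shows "((1 / real n) * A - c0)^2 =
    (1 / (real n)^2) * (\<Sum>i<n. \<Sum>l<n. a i * a l) - (2 * c0 / real n) * (\<Sum>i<n. a i * 1) + c0^2"
proof -
  have "A * A = (\<Sum>i<n. \<Sum>l<n. a i * a l)" unfolding assms by (rule sum_product)
  then show ?thesis using n1 assms by (simp add: power2_eq_square field_simps)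
qed

lemma double_sum_if:
  fixes q m :: "nat \<Rightarrow> real"
  shows "(\<Sum>i<n. \<Sum>l<n. if i = l then q i else m i * m l) =
     (\<Sum>i<n. q i - m i * m i) + (\<Sum>i<n. m i) * (\<Sum>i<n. m i)"
proof -
  have "(\<Sum>i<n. \<Sum>l<n. if i = l then q i else m i * m l) =
        (\<Sum>i<n. \<Sum>l<n. m i * m l + (if i = l then q i - m i * m i else 0))"
    by (intro sum.cong refl) auto
  also have "\<dots> = (\<Sum>i<n. \<Sum>l<n. m i * m l) + (\<Sum>i<n. q i - m i * m i)"
    by (simp add: sum.distrib)
  also have "(\<Sum>i<n. \<Sum>l<n. m i * m l) = (\<Sum>i<n. m i) * (\<Sum>i<n. m i)"
    by (rule sum_product[symmetric])
  finally show ?thesis by simp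
qed

lemma Ejk:
  fixes j k :: 'm
  defines "c0 \<equiv> (if j = k then 1 / real CARD('m) else 0)"
  shows "integrable (jittered_law n D) (\<lambda>x. ((1 / real n) * (\<Sum>i<n. x i $ j * x i $ k) - c0)^2)"
    and "(\<integral>x. ((1 / real n) * (\<Sum>i<n. x i $ j * x i $ k) - c0)^2 \<partial>jittered_law n D) =
      (1 / (real n)^2) * (\<Sum>i<n. (\<integral>y. (y $ j * y $ k) * (y $ j * y $ k) \<partial>mu i) - (\<integral>y. y $ j * y $ k \<partial>mu i) * (\<integral>y. y $ j * y $ k \<partial>mu i))"
proof -
  let ?P = "jittered_law n D"
  interpret P: prob_space ?P by (rule P_prob)
  define a where "a y = y $ j * y $ k" for y :: "real^'m"
  have bm: "a \<in> borel_measurable SM" unfolding a_def[abs_def]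
    by (intro bm_cont cont_jk)
  have bd: "\<bar>a x\<bar> \<le> 1" if "x \<in> sphere 0 1" for x :: "real^'m"
    using comp_le1[OF that, of j] comp_le1[OF that, of k] by (simp add: a_def abs_mult mult_le_one)
  have bm1: "(\<lambda>_. 1::real) \<in> borel_measurable SM" by simp
  have bd1: "\<bar>(1::real)\<bar> \<le> 1" by simp
  note pI = pair_int(1)[OF _ _ bm bd bm bd]
  note pE = pair_int(2)[OF _ _ bm bd bm bd]
  note sI = pair_int(1)[OF _ _ bm bd bm1 bd1]
  note sE = pair_int(2)[OF _ _ bm bd bm1 bd1]
  define q where "q i = (\<integral>y. a y * a y \<partial>mu i)" for i
  define m where "m i = (\<integral>y. a y \<partial>mu i)" for i
  let ?E1 = "\<lambda>x. (\<Sum>i<n. \<Sum>l<n. a (x i) * a (x l))"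
  let ?E2 = "\<lambda>x. (\<Sum>i<n. a (x i) * 1)"
  have I1: "integrable ?P ?E1"
    by (intro Bochner_Integration.integrable_sum pI) auto
  have I2: "integrable ?P ?E2"
    by (intro Bochner_Integration.integrable_sum sI) auto
  have V1: "(\<integral>x. ?E1 x \<partial>?P) = (\<Sum>i<n. \<Sum>l<n. if i = l then q i else m i * m l)"
  proof -
    have "(\<integral>x. ?E1 x \<partial>?P) = (\<Sum>i<n. \<integral>x. (\<Sum>l<n. a (x i) * a (x l)) \<partial>?P)"
      by (rule Bochner_Integration.integral_sum[where f="\<lambda>i x. \<Sum>l<n. a (x i) * a (x l)"])
         (intro Bochner_Integration.integrable_sum pI, auto)
    also have "\<dots> = (\<Sum>i<n. \<Sum>l<n. \<integral>x. a (x i) * a (x l) \<partial>?P)"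
      by (intro sum.cong refl Bochner_Integration.integral_sum[where f="\<lambda>l x. a (x _) * a (x l)"] pI) auto
    also have "\<dots> = (\<Sum>i<n. \<Sum>l<n. if i = l then q i else m i * m l)"
    proof (intro sum.cong refl)
      fix i l assume "i \<in> {..<n}" "l \<in> {..<n}"
      then show "(\<integral>x. a (x i) * a (x l) \<partial>?P) = (if i = l then q i else m i * m l)"
        using pE[of i l] by (simp add: q_def m_def)
    qed
    finally show ?thesis .
  qed
  have V2: "(\<integral>x. ?E2 x \<partial>?P) = (\<Sum>i<n. m i)"
  proof -
    have "(\<integral>x. ?E2 x \<partial>?P) = (\<Sum>i<n. \<integral>x. a (x i) * 1 \<partial>?P)"
      by (rule Bochner_Integration.integral_sum[where f="\<lambda>i x. a (x i) * 1"]) (intro sI, auto)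
    also have "\<dots> = (\<Sum>i<n. m i)"
    proof (intro sum.cong refl)
      fix i assume "i \<in> {..<n}"
      then show "(\<integral>x. a (x i) * 1 \<partial>?P) = m i"
        using sE[of i i] by (simp add: m_def)
    qed
    finally show ?thesis .
  qed
  have SM_m: "(\<Sum>i<n. m i) = real n * c0"
    unfolding m_def a_def c0_def by (rule sum_moments)
  have pw: "((1 / real n) * (\<Sum>i<n. x i $ j * x i $ k) - c0)^2 =
     (1 / (real n)^2) * ?E1 x - (2 * c0 / real n) * ?E2 x + c0^2" for x :: "nat \<Rightarrow> real^'m"
    by (rule sq_expand) (simp add: a_def)
  have IE: "integrable ?P (\<lambda>x. (1 / (real n)^2) * ?E1 x - (2 * c0 / real n) * ?E2 x + c0^2)"
    using I1 I2 by auto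
  then show "integrable ?P (\<lambda>x. ((1 / real n) * (\<Sum>i<n. x i $ j * x i $ k) - c0)^2)"
    unfolding pw .
  have "(\<integral>x. ((1 / real n) * (\<Sum>i<n. x i $ j * x i $ k) - c0)^2 \<partial>?P) =
     (\<integral>x. (1 / (real n)^2) * ?E1 x - (2 * c0 / real n) * ?E2 x + c0^2 \<partial>?P)"
    unfolding pw ..
  also have "\<dots> = (1 / (real n)^2) * (\<integral>x. ?E1 x \<partial>?P) - (2 * c0 / real n) * (\<integral>x. ?E2 x \<partial>?P) + c0^2"
    using I1 I2 P.prob_space by (simp add: Bochner_Integration.integral_add Bochner_Integration.integral_diff)
  also have "\<dots> = (1 / (real n)^2) * (\<Sum>i<n. q i - m i * m i)"
    unfolding V1 V2 double_sum_if SM_m using n1 by (simp add: field_simps power2_eq_square)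
  finally show "(\<integral>x. ((1 / real n) * (\<Sum>i<n. x i $ j * x i $ k) - c0)^2 \<partial>jittered_law n D) =
      (1 / (real n)^2) * (\<Sum>i<n. (\<integral>y. (y $ j * y $ k) * (y $ j * y $ k) \<partial>mu i) - (\<integral>y. y $ j * y $ k \<partial>mu i) * (\<integral>y. y $ j * y $ k \<partial>mu i))"
    by (simp add: q_def m_def a_def)
qed

end

context jit begin

interpretation SM: finite_measure SM by (rule finite_SM)

lemma geo:
  assumes i: "i < n" and x: "x \<in> D i" and y: "y \<in> D i"
  shows "(1 - (c / real n powr (1 / real (CARD('m) - 1)))^2 / 2)^2 \<le> (x \<bullet> y)^2"
proof -
  define d where "d = c / real n powr (1 / real (CARD('m) - 1))"
  have diam: "diameter (D i) \<le> d" and small: "d < sqrt 2"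
    using jp i unfolding jittered_partition_def d_def by auto
  have sub: "D i \<subseteq> sphere 0 1" by (rule D_sub[OF i])
  have bnd: "bounded (D i)" using sub bounded_subset bounded_sphere by blast
  have dxy: "dist x y \<le> d" using diameter_bounded_bound[OF bnd x y] diam by linarith
  have nx: "x \<bullet> x = 1" and ny: "y \<bullet> y = 1"
    using sub x y power2_norm_eq_inner[of x] power2_norm_eq_inner[of y] by auto
  have "(dist x y)^2 = (x - y) \<bullet> (x - y)" by (simp add: dist_norm power2_norm_eq_inner)
  also have "\<dots> = x \<bullet> x - 2 * (x \<bullet> y) + y \<bullet> y" by (simp add: inner_diff inner_commute algebra_simps)
  finally have eq: "x \<bullet> y = 1 - (dist x y)^2 / 2" using nx ny by (simp add: field_simps)
  have d0: "0 \<le> d" using dxy zero_le_dist[of x y] by linarith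
  have "(dist x y)^2 \<le> d^2" using dxy by (intro power_mono) auto
  then have ge: "1 - d^2 / 2 \<le> x \<bullet> y" using eq by simp
  have "d^2 < (sqrt 2)^2" using small d0 by (intro power_strict_mono) auto
  then have b0: "0 \<le> 1 - d^2 / 2" by simp
  have "(1 - d^2 / 2)^2 \<le> (x \<bullet> y)^2" using ge b0 by (intro power_mono) auto
  then show ?thesis unfolding d_def .
qed

lemma inner_sq_sum: "((x::real^'m) \<bullet> y)^2 = (\<Sum>j\<in>UNIV. \<Sum>k\<in>UNIV. (x $ j * x $ k) * (y $ j * y $ k))"
proof -
  have "(x \<bullet> y)^2 = (\<Sum>j\<in>UNIV. x $ j * y $ j) * (\<Sum>k\<in>UNIV. x $ k * y $ k)"
    by (simp add: inner_vec_def power2_eq_square)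
  also have "\<dots> = (\<Sum>j\<in>UNIV. \<Sum>k\<in>UNIV. (x $ j * y $ j) * (x $ k * y $ k))"
    by (rule sum_product)
  finally show ?thesis by (simp add: algebra_simps)
qed

lemma LB:
  assumes i: "i < n"
  shows "(1 - (c / real n powr (1 / real (CARD('m) - 1)))^2 / 2)^2 \<le>
     (\<Sum>j\<in>UNIV. \<Sum>k\<in>UNIV. (\<integral>y. y $ j * y $ k \<partial>mu i)^2)"
proof -
  define b where "b = (1 - (c / real n powr (1 / real (CARD('m) - 1)))^2 / 2)^2"
  interpret MU: prob_space "mu i" by (rule mu_prob[OF i])
  define mm where "mm j k = (\<integral>y. y $ j * y $ k \<partial>mu i)" for j k
  have bm: "(\<lambda>y::real^'m. y $ j * y $ k) \<in> borel_measurable SM" for j k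
    by (intro bm_cont cont_jk)
  have bd: "\<bar>y $ j * y $ k\<bar> \<le> 1" if "y \<in> sphere 0 1" for y :: "real^'m" and j k
    using comp_le1[OF that, of j] comp_le1[OF that, of k] by (simp add: abs_mult mult_le_one)
  have intjk: "integrable (mu i) (\<lambda>y. y $ j * y $ k)" for j k
    by (rule mu_integral(1)[OF i bm bd])
  have hx: "b \<le> (\<Sum>j\<in>UNIV. \<Sum>k\<in>UNIV. mm j k * (x $ j * x $ k))" if x: "x \<in> D i" for x
  proof -
    have "(\<Sum>j\<in>UNIV. \<Sum>k\<in>UNIV. mm j k * (x $ j * x $ k)) =
        (\<Sum>j\<in>UNIV. \<Sum>k\<in>UNIV. \<integral>y. (x $ j * x $ k) * (y $ j * y $ k) \<partial>mu i)"
      by (simp add: mm_def mult.commute)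
    also have "\<dots> = (\<Sum>j\<in>UNIV. \<integral>y. (\<Sum>k\<in>UNIV. (x $ j * x $ k) * (y $ j * y $ k)) \<partial>mu i)"
      by (intro sum.cong refl Bochner_Integration.integral_sum[symmetric, where f="\<lambda>k y. (x $ _ * x $ k) * (y $ _ * y $ k)"]
          integrable_mult_right intjk)
    also have "\<dots> = (\<integral>y. (\<Sum>j\<in>UNIV. \<Sum>k\<in>UNIV. (x $ j * x $ k) * (y $ j * y $ k)) \<partial>mu i)"
      by (intro Bochner_Integration.integral_sum[symmetric] Bochner_Integration.integrable_sum integrable_mult_right intjk)
    also have "\<dots> = (\<integral>y. (x \<bullet> y)^2 \<partial>mu i)"
      by (simp add: inner_sq_sum)
    finally have eq: "(\<Sum>j\<in>UNIV. \<Sum>k\<in>UNIV. mm j k * (x $ j * x $ k)) = (\<integral>y. (x \<bullet> y)^2 \<partial>mu i)" .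
    have "integrable (mu i) (\<lambda>y. (x \<bullet> y)^2)"
      unfolding inner_sq_sum
      by (intro Bochner_Integration.integrable_sum integrable_mult_right intjk)
    moreover have "AE y in mu i. b \<le> (x \<bullet> y)^2"
      using mu_AE[OF i] by (rule eventually_mono) (use geo[OF i x] b_def in auto)
    ultimately have "b \<le> (\<integral>y. (x \<bullet> y)^2 \<partial>mu i)" by (rule MU.integral_ge_const)
    then show ?thesis using eq by simp
  qed
  have "(\<Sum>j\<in>UNIV. \<Sum>k\<in>UNIV. (mm j k)^2) = (\<Sum>j\<in>UNIV. \<Sum>k\<in>UNIV. \<integral>x. mm j k * (x $ j * x $ k) \<partial>mu i)"
    by (simp add: mm_def power2_eq_square)
  also have "\<dots> = (\<Sum>j\<in>UNIV. \<integral>x. (\<Sum>k\<in>UNIV. mm j k * (x $ j * x $ k)) \<partial>mu i)"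
    by (intro sum.cong refl Bochner_Integration.integral_sum[symmetric, where f="\<lambda>k x. mm _ k * (x $ _ * x $ k)"]
          integrable_mult_right intjk)
  also have "\<dots> = (\<integral>x. (\<Sum>j\<in>UNIV. \<Sum>k\<in>UNIV. mm j k * (x $ j * x $ k)) \<partial>mu i)"
    by (intro Bochner_Integration.integral_sum[symmetric] Bochner_Integration.integrable_sum integrable_mult_right intjk)
  finally have eq2: "(\<Sum>j\<in>UNIV. \<Sum>k\<in>UNIV. (mm j k)^2) = (\<integral>x. (\<Sum>j\<in>UNIV. \<Sum>k\<in>UNIV. mm j k * (x $ j * x $ k)) \<partial>mu i)" .
  have "integrable (mu i) (\<lambda>x. \<Sum>j\<in>UNIV. \<Sum>k\<in>UNIV. mm j k * (x $ j * x $ k))"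
    by (intro Bochner_Integration.integrable_sum integrable_mult_right intjk)
  moreover have "AE x in mu i. b \<le> (\<Sum>j\<in>UNIV. \<Sum>k\<in>UNIV. mm j k * (x $ j * x $ k))"
    using mu_AE[OF i] by (rule eventually_mono) (rule hx)
  ultimately have "b \<le> (\<integral>x. (\<Sum>j\<in>UNIV. \<Sum>k\<in>UNIV. mm j k * (x $ j * x $ k)) \<partial>mu i)" by (rule MU.integral_ge_const)
  then show ?thesis using eq2 unfolding b_def mm_def by simp
qed

end

context jit begin

interpretation SM: finite_measure SM by (rule finite_SM)

lemma q_sum:
  assumes i: "i < n"
  shows "(\<Sum>j\<in>UNIV. \<Sum>k\<in>UNIV. \<integral>y. (y $ j * y $ k) * (y $ j * y $ k) \<partial>mu i) = 1"
proof -
  interpret MU: prob_space "mu i" by (rule mu_prob[OF i])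
  have bm: "(\<lambda>y::real^'m. (y $ j * y $ k) * (y $ j * y $ k)) \<in> borel_measurable SM" for j k
    by (intro bm_cont continuous_intros)
  have bd: "\<bar>(y $ j * y $ k) * (y $ j * y $ k)\<bar> \<le> 1" if "y \<in> sphere 0 1" for y :: "real^'m" and j k
    using comp_le1[OF that, of j] comp_le1[OF that, of k] by (simp add: abs_mult mult_le_one)
  have intjk: "integrable (mu i) (\<lambda>y. (y $ j * y $ k) * (y $ j * y $ k))" for j k
    by (rule mu_integral(1)[OF i bm bd])
  have "(\<Sum>j\<in>UNIV. \<Sum>k\<in>UNIV. \<integral>y. (y $ j * y $ k) * (y $ j * y $ k) \<partial>mu i) =
      (\<Sum>j\<in>UNIV. \<integral>y. (\<Sum>k\<in>UNIV. (y $ j * y $ k) * (y $ j * y $ k)) \<partial>mu i)"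
    by (intro sum.cong refl Bochner_Integration.integral_sum[symmetric, where f="\<lambda>k y. (y $ _ * y $ k) * (y $ _ * y $ k)"] intjk)
  also have "\<dots> = (\<integral>y. (\<Sum>j\<in>UNIV. \<Sum>k\<in>UNIV. (y $ j * y $ k) * (y $ j * y $ k)) \<partial>mu i)"
    by (intro Bochner_Integration.integral_sum[symmetric] Bochner_Integration.integrable_sum intjk)
  also have "\<dots> = (\<integral>y. 1 \<partial>mu i)"
  proof (rule Bochner_Integration.integral_cong[OF refl])
    fix y assume "y \<in> space (mu i)"
    then have y: "y \<in> sphere 0 1" by simp
    have "(\<Sum>j\<in>UNIV. \<Sum>k\<in>UNIV. (y $ j * y $ k) * (y $ j * y $ k)) =
        (\<Sum>j\<in>UNIV. y $ j * y $ j) * (\<Sum>k\<in>UNIV. y $ k * y $ k)"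
      by (simp add: sum_product algebra_simps)
    then show "(\<Sum>j\<in>UNIV. \<Sum>k\<in>UNIV. (y $ j * y $ k) * (y $ j * y $ k)) = 1"
      using sum_sq_sphere[OF y] by simp
  qed
  also have "\<dots> = 1" using MU.prob_space by simp
  finally show ?thesis .
qed

lemma F_expand:
  "(frobenius_norm ((1 / real n) *\<^sub>R analysis_gram n x - (1 / real CARD('m)) *\<^sub>R mat 1))^2 =
   (\<Sum>j\<in>UNIV. \<Sum>k\<in>UNIV. ((1 / real n) * (\<Sum>i<n. x i $ j * x i $ k) - (if j = k then 1 / real CARD('m) else 0))^2)"
proof -
  have "(frobenius_norm ((1 / real n) *\<^sub>R analysis_gram n x - (1 / real CARD('m)) *\<^sub>R mat 1))^2 =
     (\<Sum>j\<in>UNIV. \<Sum>k\<in>UNIV. (((1 / real n) *\<^sub>R analysis_gram n x - (1 / real CARD('m)) *\<^sub>R mat 1) $ j $ k)^2)"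
    unfolding frobenius_norm_def by (intro real_sqrt_pow2 sum_nonneg) auto
  also have "\<dots> = (\<Sum>j\<in>UNIV. \<Sum>k\<in>UNIV. ((1 / real n) * (\<Sum>i<n. x i $ j * x i $ k) - (if j = k then 1 / real CARD('m) else 0))^2)"
    by (intro sum.cong refl) (auto simp: analysis_gram_def mat_def)
  finally show ?thesis .
qed

lemma main_jit:
  "(\<integral>x. (frobenius_norm ((1 / real n) *\<^sub>R analysis_gram n x
              - (1 / real CARD('m)) *\<^sub>R mat 1))^2 \<partial>(jittered_law n D))
         \<le> 1 / real n - 1 / real n *
             (1 - c^2 / (2 * real n powr (2 / real (CARD('m) - 1))))^2"
proof -
  let ?P = "jittered_law n D"
  define c0 where "c0 j k = (if j = k then 1 / real CARD('m) else 0)" for j k :: 'm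
  define G where "G j k x = ((1 / real n) * (\<Sum>i<n. x i $ j * x i $ k) - c0 j k)^2" for j k x
  define q where "q i j k = (\<integral>y. (y $ j * y $ k) * (y $ j * y $ k) \<partial>mu i)" for i j k
  define m where "m i j k = (\<integral>y. y $ j * y $ k \<partial>mu i)" for i j k
  define b where "b = (1 - (c / real n powr (1 / real (CARD('m) - 1)))^2 / 2)^2"
  have GI: "integrable ?P (G j k)" for j k
    unfolding G_def[abs_def] c0_def by (rule Ejk(1))
  have GE: "(\<integral>x. G j k x \<partial>?P) = (1 / (real n)^2) * (\<Sum>i<n. q i j k - m i j k * m i j k)" for j k
    unfolding G_def c0_def q_def m_def by (rule Ejk(2))
  have "(\<integral>x. (frobenius_norm ((1 / real n) *\<^sub>R analysis_gram n x
              - (1 / real CARD('m)) *\<^sub>R mat 1))^2 \<partial>?P) = (\<integral>x. (\<Sum>j\<in>UNIV. \<Sum>k\<in>UNIV. G j k x) \<partial>?P)"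
    unfolding F_expand G_def c0_def ..
  also have "\<dots> = (\<Sum>j\<in>UNIV. \<integral>x. (\<Sum>k\<in>UNIV. G j k x) \<partial>?P)"
    by (intro Bochner_Integration.integral_sum Bochner_Integration.integrable_sum GI)
  also have "\<dots> = (\<Sum>j\<in>UNIV. \<Sum>k\<in>UNIV. \<integral>x. G j k x \<partial>?P)"
    by (intro sum.cong refl Bochner_Integration.integral_sum[where f="\<lambda>k x. G _ k x"] GI)
  also have "\<dots> = (\<Sum>j\<in>UNIV. \<Sum>k\<in>UNIV. (1 / (real n)^2) * (\<Sum>i<n. q i j k - m i j k * m i j k))"
    by (simp add: GE)
  also have "\<dots> = (1 / (real n)^2) * (\<Sum>i<n. (\<Sum>j\<in>UNIV. \<Sum>k\<in>UNIV. q i j k) - (\<Sum>j\<in>UNIV. \<Sum>k\<in>UNIV. (m i j k)^2))"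
  proof -
    let ?f = "\<lambda>i j k. q i j k - m i j k * m i j k"
    have e1: "(\<Sum>j\<in>UNIV. \<Sum>k\<in>UNIV. (1 / (real n)^2) * (\<Sum>i<n. ?f i j k)) =
        (1 / (real n)^2) * (\<Sum>j\<in>UNIV. \<Sum>k\<in>UNIV. \<Sum>i<n. ?f i j k)"
      by (simp add: sum_distrib_left)
    have "(\<Sum>j\<in>UNIV. \<Sum>k\<in>UNIV. \<Sum>i<n. ?f i j k) = (\<Sum>j\<in>UNIV. \<Sum>i<n. \<Sum>k\<in>UNIV. ?f i j k)"
      by (intro sum.cong refl sum.swap)
    also have "\<dots> = (\<Sum>i<n. \<Sum>j\<in>UNIV. \<Sum>k\<in>UNIV. ?f i j k)"
      by (rule sum.swap)
    also have "\<dots> = (\<Sum>i<n. (\<Sum>j\<in>UNIV. \<Sum>k\<in>UNIV. q i j k) - (\<Sum>j\<in>UNIV. \<Sum>k\<in>UNIV. (m i j k)^2))"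
      by (simp add: sum_subtractf power2_eq_square)
    finally show ?thesis using e1 by simp
  qed
  also have "\<dots> \<le> (1 / (real n)^2) * (\<Sum>i<n. 1 - b)"
  proof (intro mult_left_mono sum_mono)
    fix i assume "i \<in> {..<n}"
    then have i: "i < n" by simp
    show "(\<Sum>j\<in>UNIV. \<Sum>k\<in>UNIV. q i j k) - (\<Sum>j\<in>UNIV. \<Sum>k\<in>UNIV. (m i j k)^2) \<le> 1 - b"
      using q_sum[OF i] LB[OF i] unfolding q_def m_def b_def by simp
  qed simp
  also have "\<dots> = 1 / real n - 1 / real n * b"
    using n1 by (simp add: power2_eq_square field_simps)
  also have "b = (1 - c^2 / (2 * real n powr (2 / real (CARD('m) - 1))))^2"
  proof -
    have np: "0 < real n" using n1 by simp
    have "(real n powr (1 / real (CARD('m) - 1)))^2 = real n powr (2 / real (CARD('m) - 1))"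
      using np by (simp add: powr_power)
    then show ?thesis unfolding b_def by (simp add: power_divide mult.commute)
  qed
  finally show ?thesis .
qed

end

theorem theorem2:
  fixes n :: nat and c :: real and D :: "nat \<Rightarrow> (real^'m) set"
  assumes "CARD('m) \<ge> 2"
    and "n \<ge> 1"
    and "jittered_partition n c D"
  shows "(\<integral>x. (frobenius_norm ((1 / real n) *\<^sub>R analysis_gram n x
              - (1 / real CARD('m)) *\<^sub>R mat 1))^2 \<partial>(jittered_law n D))
         \<le> 1 / real n - 1 / real n *
             (1 - c^2 / (2 * real n powr (2 / real (CARD('m) - 1))))^2"
proof -
  interpret jit n c D using assms by unfold_locales
  show ?thesis by (rule main_jit)
qed


end
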